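(* Let $\Gamma$ be a group, $\alpha\in\mathrm{Aut}(\Gamma)$ and $k\in\Gamma$, and put $\tilde\alpha=\mathrm{ad}(k)\circ\alpha$, where $\mathrm{ad}(k)(g)=kgk^{-1}$. Then $\bigoplus_{\mathbf{Q}_2}\Gamma\rtimes_\alpha V\cong\bigoplus_{\mathbf{Q}_2}\Gamma\rtimes_{\tilde\alpha}V$.
   Context: Cantor space $\mathfrak C=\{0,1\}^{\mathbf N}$; $C_m=\{m\cdot x\}$. Thompson's group $V$: homeomorphisms $v$ with $v(m_kx)=m'_kx$ for partitions $\mathfrak C=\bigsqcup C_{m_k}=\bigsqcup C_{m'_k}$; slope $v'(x)=2^{|m_k|-|m'_k|}$ on $C_{m_k}$. $\mathbf{Q}_2\subset\mathfrak C$: eventually-zero sequences. For a group $\Gamma$ and $\alpha\in\mathrm{Aut}(\Gamma)$, $\bigoplus_{\mathbf{Q}_2}\Gamma\rtimes_\alpha V$ is the semidirect product of finitely supported maps $\mathbf{Q}_2\to\Gamma$ by $V$ acting via $(v\cdot a)(x)=\alpha^{\log_2 v'(v^{-1}x)}(a(v^{-1}x))$ (the fraction group associated with $(\Gamma,\alpha)$). *)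

theory Defs
  imports "HOL-Algebra.Algebra"
begin

text \<open>Cantor space is nat => bool (False = 0, True = 1); finite words are bool lists.\<close>
type_synonym cantor = "nat \<Rightarrow> bool"

definition prepend :: "bool list \<Rightarrow> cantor \<Rightarrow> cantor" where
  "prepend m x = (\<lambda>i. if i < length m then m ! i else x (i - length m))"

definition cyl :: "bool list \<Rightarrow> cantor set" where
  "cyl m = range (prepend m)"

definition cyl_partition :: "bool list list \<Rightarrow> bool" where
  "cyl_partition ms \<longleftrightarrow> (\<forall>x. \<exists>!k. k < length ms \<and> x \<in> cyl (ms ! k))"

definition thompsonV :: "(cantor \<Rightarrow> cantor) set" where
  "thompsonV = {v. \<exists>ms ms'. length ms = length ms' \<and> cyl_partition ms \<and> cyl_partition ms' \<and>
      (\<forall>k < length ms. \<forall>x. v (prepend (ms ! k) x) = prepend (ms' ! k) x)}"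

text \<open>log_2 of the slope v'(x): equals |m| - |m'| whenever v(m y) = m' y for all y and x is in C_m
  (this does not depend on the choice of m, m').\<close>
definition log2_slope :: "(cantor \<Rightarrow> cantor) \<Rightarrow> cantor \<Rightarrow> int" where
  "log2_slope v x = (SOME d. \<exists>m m'. x \<in> cyl m \<and> (\<forall>y. v (prepend m y) = prepend m' y) \<and>
       d = int (length m) - int (length m'))"

definition Q2 :: "cantor set" where
  "Q2 = {x. \<exists>N. \<forall>n\<ge>N. \<not> x n}"

definition aut_pow :: "('g, 'b) monoid_scheme \<Rightarrow> ('g \<Rightarrow> 'g) \<Rightarrow> int \<Rightarrow> 'g \<Rightarrow> 'g" where
  "aut_pow G \<alpha> n = (if 0 \<le> n then \<alpha> ^^ nat n else (inv_into (carrier G) \<alpha>) ^^ nat (- n))"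

definition fin_supp_maps :: "('g, 'b) monoid_scheme \<Rightarrow> (cantor \<Rightarrow> 'g) set" where
  "fin_supp_maps G = {a. (\<forall>x\<in>Q2. a x \<in> carrier G) \<and> (\<forall>x. x \<notin> Q2 \<longrightarrow> a x = \<one>\<^bsub>G\<^esub>)
                        \<and> finite {x. a x \<noteq> \<one>\<^bsub>G\<^esub>}}"

definition V_act :: "('g, 'b) monoid_scheme \<Rightarrow> ('g \<Rightarrow> 'g) \<Rightarrow> (cantor \<Rightarrow> cantor) \<Rightarrow> (cantor \<Rightarrow> 'g) \<Rightarrow> cantor \<Rightarrow> 'g" where
  "V_act G \<alpha> v a = (\<lambda>x. if x \<in> Q2 then aut_pow G \<alpha> (log2_slope v (inv_into UNIV v x)) (a (inv_into UNIV v x)) else \<one>\<^bsub>G\<^esub>)"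

text \<open>The semidirect product (bigoplus_{Q_2} Gamma) rtimes_alpha V.\<close>
definition fraction_group :: "('g, 'b) monoid_scheme \<Rightarrow> ('g \<Rightarrow> 'g) \<Rightarrow> ((cantor \<Rightarrow> 'g) \<times> (cantor \<Rightarrow> cantor)) monoid" where
  "fraction_group G \<alpha> = \<lparr> carrier = fin_supp_maps G \<times> thompsonV,
     monoid.mult = (\<lambda>p q. ((\<lambda>x. fst p x \<otimes>\<^bsub>G\<^esub> V_act G \<alpha> (snd p) (fst q) x), snd p \<circ> snd q)),
     monoid.one = ((\<lambda>x. \<one>\<^bsub>G\<^esub>), id) \<rparr>"

end

theory Submission
  imports Defs
begin


lemma prepend_lt[simp]: "i < length m \<Longrightarrow> prepend m x i = m!i"
  by (simp add: prepend_def)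

lemma prepend_ge[simp]: "prepend m x (i + length m) = x i"
  by (simp add: prepend_def)

lemma prepend_append: "prepend (m @ u) y = prepend m (prepend u y)"
  by (auto simp: prepend_def nth_append fun_eq_iff)

lemma cyl_iff: "x \<in> cyl m \<longleftrightarrow> (\<forall>i<length m. x i = m!i)"
proof
  assume "x \<in> cyl m" then show "\<forall>i<length m. x i = m!i" by (auto simp: cyl_def)
next
  assume a: "\<forall>i<length m. x i = m!i"
  have "x = prepend m (\<lambda>i. x (i + length m))"
    using a by (auto simp: prepend_def fun_eq_iff)
  then show "x \<in> cyl m" unfolding cyl_def by (metis rangeI)
qed

lemma cyl_ex: "x \<in> cyl m \<Longrightarrow> \<exists>z. x = prepend m z"
  by (auto simp: cyl_def)

lemma prepend_in_cyl[simp]: "prepend m y \<in> cyl m"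
  by (simp add: cyl_def)

lemma prepend_inj: "prepend m y = prepend m z \<Longrightarrow> y = z"
proof
  fix i assume "prepend m y = prepend m z"
  then have "prepend m y (i + length m) = prepend m z (i + length m)" by simp
  then show "y i = z i" by simp
qed

lemma prepend_len_le:
  assumes "\<forall>y. prepend m y = prepend m' y" shows "length m \<le> length m'"
proof (rule ccontr)
  assume "\<not> length m \<le> length m'"
  then have l: "length m' < length m" by simp
  define y where "y = (\<lambda>_::nat. \<not> m ! length m')"
  have "prepend m y (0 + length m') = prepend m' y (0 + length m')" using assms by simp
  then show False using l by (simp add: y_def del: prepend_ge) (simp add: prepend_def)
qed

lemma prepend_eq_words:
  assumes "\<forall>y. prepend m y = prepend m' y" shows "m = m'"
proof -
  have "length m = length m'" using prepend_len_le[OF assms] prepend_len_le[of m' m] assms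
    by (metis le_antisym)
  moreover have "\<And>i. i < length m \<Longrightarrow> m!i = m'!i"
  proof -
    fix i assume "i < length m"
    then show "m!i = m'!i" using assms \<open>length m = length m'\<close>
      by (metis prepend_lt)
  qed
  ultimately show ?thesis by (simp add: nth_equalityI)
qed

lemma cyl_prefix: "x \<in> cyl m \<Longrightarrow> x \<in> cyl n \<Longrightarrow> length m \<le> length n \<Longrightarrow> n = m @ drop (length m) n"
proof -
  assume a: "x \<in> cyl m" "x \<in> cyl n" "length m \<le> length n"
  have "take (length m) n = m"
  proof (rule nth_equalityI)
    show "length (take (length m) n) = length m" using a(3) by simp
    fix i assume "i < length (take (length m) n)"
    then have i: "i < length m" using a(3) by simp
    then have "take (length m) n ! i = n ! i" by simp
    also have "\<dots> = x i" using a(2) i a(3) by (simp add: cyl_iff)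
    also have "\<dots> = m ! i" using a(1) i by (simp add: cyl_iff)
    finally show "take (length m) n ! i = m ! i" .
  qed
  then show ?thesis by (metis append_take_drop_id)
qed

lemma slope_unique_aux:
  assumes "x \<in> cyl m" "\<forall>y. v (prepend m y) = prepend m' y"
    "x \<in> cyl n" "\<forall>y. v (prepend n y) = prepend n' y" "length m \<le> length n"
  shows "int (length m) - int (length m') = int (length n) - int (length n')"
proof -
  define u where "u = drop (length m) n"
  have n: "n = m @ u" using cyl_prefix[OF assms(1,3,5)] u_def by simp
  have "\<forall>y. prepend n' y = prepend (m' @ u) y"
    using assms(2,4) by (simp add: n prepend_append)
  then have "n' = m' @ u" by (rule prepend_eq_words)
  then show ?thesis using n by simp
qed

lemma slope_unique:
  assumes "x \<in> cyl m" "\<forall>y. v (prepend m y) = prepend m' y"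
    "x \<in> cyl n" "\<forall>y. v (prepend n y) = prepend n' y"
  shows "int (length m) - int (length m') = int (length n) - int (length n')"
proof (cases "length m \<le> length n")
  case True then show ?thesis using slope_unique_aux assms by blast
next
  case False then show ?thesis using slope_unique_aux[OF assms(3,4,1,2)] by simp
qed

lemma slope_eq:
  assumes "x \<in> cyl m" "\<forall>y. v (prepend m y) = prepend m' y"
  shows "log2_slope v x = int (length m) - int (length m')"
  unfolding log2_slope_def
  apply (rule some_equality)
  using assms apply blast
  using assms slope_unique by blast

lemma V_local:
  assumes "v \<in> thompsonV"
  obtains m m' where "x \<in> cyl m" "\<forall>y. v (prepend m y) = prepend m' y"
proof -
  obtain ms ms' where h: "length ms = length ms'" "cyl_partition ms" "cyl_partition ms'"
    "\<forall>k < length ms. \<forall>x. v (prepend (ms ! k) x) = prepend (ms' ! k) x"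
    using assms unfolding thompsonV_def by blast
  obtain j where "j < length ms" "x \<in> cyl (ms ! j)" using h(2) unfolding cyl_partition_def by blast
  then show ?thesis using that h(4) by blast
qed

lemma V_bij:
  assumes "v \<in> thompsonV" shows "bij v"
proof -
  obtain ms ms' where h: "length ms = length ms'" "cyl_partition ms" "cyl_partition ms'"
    "\<forall>k < length ms. \<forall>x. v (prepend (ms ! k) x) = prepend (ms' ! k) x"
    using assms unfolding thompsonV_def by blast
  have "inj v"
  proof
    fix x y assume e: "v x = v y"
    obtain j where j: "j < length ms" "x \<in> cyl (ms ! j)" using h(2) unfolding cyl_partition_def by blast
    obtain l where l: "l < length ms" "y \<in> cyl (ms ! l)" using h(2) unfolding cyl_partition_def by blast
    obtain zx where zx: "x = prepend (ms!j) zx" using j cyl_ex by blast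
    obtain zy where zy: "y = prepend (ms!l) zy" using l cyl_ex by blast
    have vx: "v x = prepend (ms'!j) zx" using h(4) j zx by simp
    have vy: "v y = prepend (ms'!l) zy" using h(4) l zy by simp
    have "v x \<in> cyl (ms'!j)" using vx by simp
    moreover have "v x \<in> cyl (ms'!l)" using vy e by simp
    moreover have "\<exists>!k. k < length ms' \<and> v x \<in> cyl (ms' ! k)" using h(3) unfolding cyl_partition_def by blast
    ultimately have "j = l" using j(1) l(1) h(1) by auto
    then show "x = y" using vx vy e zx zy prepend_inj by metis
  qed
  moreover have "surj v"
  proof -
    { fix x
      obtain j where j: "j < length ms'" "x \<in> cyl (ms' ! j)" using h(3) unfolding cyl_partition_def by blast
      obtain z where "x = prepend (ms'!j) z" using j cyl_ex by blast
      then have "x = v (prepend (ms!j) z)" using h(4) j h(1) by simp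
      then have "x \<in> range v" by blast }
    then show ?thesis by blast
  qed
  ultimately show ?thesis by (simp add: bij_def)
qed

lemma prepend_Q2: "prepend m z \<in> Q2 \<longleftrightarrow> z \<in> Q2"
proof
  assume "prepend m z \<in> Q2"
  then obtain N where N: "\<forall>n\<ge>N. \<not> prepend m z n" by (auto simp: Q2_def)
  have "\<forall>n\<ge>N. \<not> z n"
  proof (intro allI impI)
    fix n assume "N \<le> n"
    then have "\<not> prepend m z (n + length m)" using N by (metis le_add1 order_trans)
    then show "\<not> z n" by simp
  qed
  then show "z \<in> Q2" by (auto simp: Q2_def)
next
  assume "z \<in> Q2"
  then obtain N where N: "\<forall>n\<ge>N. \<not> z n" by (auto simp: Q2_def)
  have "\<forall>n\<ge>N + length m. \<not> prepend m z n"
    using N by (auto simp: prepend_def)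
  then show "prepend m z \<in> Q2" by (auto simp: Q2_def)
qed

lemma V_Q2:
  assumes "v \<in> thompsonV" shows "v x \<in> Q2 \<longleftrightarrow> x \<in> Q2"
proof -
  obtain m m' where a: "x \<in> cyl m" "\<forall>y. v (prepend m y) = prepend m' y"
    using V_local[OF assms] by blast
  obtain z where z: "x = prepend m z" using a cyl_ex by blast
  show ?thesis using a z prepend_Q2 by simp
qed

lemma V_chain:
  assumes v: "v \<in> thompsonV" and w: "w \<in> thompsonV"
  shows "log2_slope (v \<circ> w) y = log2_slope v (w y) + log2_slope w y"
proof -
  obtain m m' where a: "y \<in> cyl m" "\<forall>t. w (prepend m t) = prepend m' t"
    using V_local[OF w] by blast
  obtain n n' where b: "w y \<in> cyl n" "\<forall>t. v (prepend n t) = prepend n' t"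
    using V_local[OF v] by blast
  obtain z where z: "y = prepend m z" using a cyl_ex by blast
  have wy: "w y = prepend m' z" using a z by simp
  have s1: "log2_slope w y = int (length m) - int (length m')" using slope_eq a by blast
  have s2: "log2_slope v (w y) = int (length n) - int (length n')" using slope_eq b by blast
  show ?thesis
  proof (cases "length m' \<le> length n")
    case True
    define u where "u = drop (length m') n"
    have n: "n = m' @ u" using cyl_prefix[of "w y" m' n] True wy b u_def by simp
    have "z \<in> cyl u" unfolding cyl_iff
    proof (intro allI impI)
      fix i assume i: "i < length u"
      have "z i = prepend m' z (i + length m')" by simp
      also have "\<dots> = n ! (i + length m')"
      proof -
        have "i + length m' < length n" using i n by simp
        then show ?thesis using b(1) unfolding wy cyl_iff by blast
      qed
      also have "\<dots> = u ! i" unfolding n by (simp add: nth_append)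
      finally show "z i = u ! i" .
    qed
    then obtain z' where z': "z = prepend u z'" using cyl_ex by blast
    have "y \<in> cyl (m @ u)" using z z' prepend_append by (metis prepend_in_cyl)
    moreover have "\<forall>t. (v \<circ> w) (prepend (m @ u) t) = prepend n' t"
      using a b by (simp add: prepend_append n)
    ultimately have "log2_slope (v \<circ> w) y = int (length (m@u)) - int (length n')"
      using slope_eq by blast
    then show ?thesis using s1 s2 n by simp
  next
    case False
    define u where "u = drop (length n) m'"
    have m': "m' = n @ u" using cyl_prefix[of "w y" n m'] False wy b u_def by simp
    have "\<forall>t. (v \<circ> w) (prepend m t) = prepend (n' @ u) t"
      using a b by (simp add: prepend_append m')
    then have "log2_slope (v \<circ> w) y = int (length m) - int (length (n' @ u))"
      using slope_eq a(1) by blast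
    then show ?thesis using s1 s2 m' by simp
  qed
qed



definition LL :: "cantor \<Rightarrow> nat" where "LL x = (LEAST N. \<forall>n\<ge>N. \<not> x n)"

lemma LL_char:
  assumes "\<forall>n\<ge>N. \<not> x n" "N = 0 \<or> x (N - 1)" shows "LL x = N"
  unfolding LL_def
proof (rule Least_equality)
  show "\<forall>n\<ge>N. \<not> x n" by fact
  fix M assume M: "\<forall>n\<ge>M. \<not> x n"
  show "N \<le> M"
  proof (rule ccontr)
    assume "\<not> N \<le> M"
    then have "N - 1 \<ge> M" "N \<noteq> 0" by auto
    then show False using M assms(2) by auto
  qed
qed

lemma LL_props:
  assumes "x \<in> Q2" shows "\<forall>n\<ge>LL x. \<not> x n" "LL x = 0 \<or> x (LL x - 1)"
proof -
  have ex: "\<exists>N. \<forall>n\<ge>N. \<not> x n" using assms by (auto simp: Q2_def)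
  show a: "\<forall>n\<ge>LL x. \<not> x n" unfolding LL_def by (rule LeastI_ex[OF ex])
  show "LL x = 0 \<or> x (LL x - 1)"
  proof (rule ccontr)
    assume c: "\<not> (LL x = 0 \<or> x (LL x - 1))"
    have "\<forall>n\<ge>LL x - 1. \<not> x n"
    proof (intro allI impI)
      fix n assume "LL x - 1 \<le> n"
      then have "n = LL x - 1 \<or> n \<ge> LL x" by auto
      then show "\<not> x n" using a c by auto
    qed
    then have "LL x \<le> LL x - 1" unfolding LL_def by (rule Least_le)
    moreover have "LL x \<noteq> 0" using c by simp
    ultimately show False by linarith
  qed
qed

lemma LL_prepend:
  assumes "z \<in> Q2" "z \<noteq> (\<lambda>_. False)" shows "LL (prepend m z) = length m + LL z"
proof (rule LL_char)
  have a: "\<forall>n\<ge>LL z. \<not> z n" and b: "LL z = 0 \<or> z (LL z - 1)" using LL_props[OF assms(1)] by auto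
  have nz: "LL z \<noteq> 0" using a assms(2) by auto
  show "\<forall>n\<ge>length m + LL z. \<not> prepend m z n"
    using a by (auto simp: prepend_def)
  have "z (LL z - 1)" using b nz by simp
  moreover have eq: "length m + LL z - 1 = (LL z - 1) + length m" using nz by simp
  have "prepend m z (length m + LL z - 1) = z (LL z - 1)" by (simp only: eq prepend_ge)
  ultimately have "prepend m z (length m + LL z - 1)" by simp
  then show "length m + LL z = 0 \<or> prepend m z (length m + LL z - 1)" by blast
qed

context group begin

lemma funpow_hom: "f \<in> hom G G \<Longrightarrow> f ^^ n \<in> hom G G"
proof (induction n)
  case 0 then show ?case by (simp add: hom_def)
next
  case (Suc n)
  have "f ^^ Suc n = f \<circ> f ^^ n" by simp
  then show ?case using Group.hom_compose[OF Suc.IH[OF Suc.prems] Suc.prems] by (simp add: comp_def)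
qed

lemma aut_pow_hom: "\<gamma> \<in> iso G G \<Longrightarrow> aut_pow G \<gamma> n \<in> hom G G"
proof -
  assume g: "\<gamma> \<in> iso G G"
  have h1: "\<gamma> \<in> hom G G" using g iso_imp_homomorphism by blast
  have h2: "inv_into (carrier G) \<gamma> \<in> hom G G" using g iso_set_sym iso_imp_homomorphism by blast
  show ?thesis unfolding aut_pow_def using funpow_hom[OF h1] funpow_hom[OF h2] by simp
qed

lemma aut_pow_closed: "\<gamma> \<in> iso G G \<Longrightarrow> x \<in> carrier G \<Longrightarrow> aut_pow G \<gamma> n x \<in> carrier G"
  by (rule hom_in_carrier[OF aut_pow_hom])

lemma aut_pow_mult: "\<gamma> \<in> iso G G \<Longrightarrow> x \<in> carrier G \<Longrightarrow> y \<in> carrier G \<Longrightarrow>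
   aut_pow G \<gamma> n (x \<otimes> y) = aut_pow G \<gamma> n x \<otimes> aut_pow G \<gamma> n y"
  by (rule hom_mult[OF aut_pow_hom])

lemma aut_pow_inv: "\<gamma> \<in> iso G G \<Longrightarrow> x \<in> carrier G \<Longrightarrow> aut_pow G \<gamma> n (inv x) = inv (aut_pow G \<gamma> n x)"
proof -
  assume g: "\<gamma> \<in> iso G G" and x: "x \<in> carrier G"
  have "group_hom G G (aut_pow G \<gamma> n)"
    unfolding group_hom_def group_hom_axioms_def using aut_pow_hom[OF g] is_group by blast
  then show ?thesis using group_hom.hom_inv x by fastforce
qed

lemma aut_pow_one: "\<gamma> \<in> iso G G \<Longrightarrow> aut_pow G \<gamma> n \<one> = \<one>"
  by (rule hom_one[OF aut_pow_hom is_group is_group])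

lemma aut_pow_0[simp]: "aut_pow G \<gamma> 0 x = x"
  by (simp add: aut_pow_def)

lemma aut_pow_1: "aut_pow G \<gamma> 1 x = \<gamma> x"
  by (simp add: aut_pow_def)

lemma aut_pow_m1: "aut_pow G \<gamma> (-1) x = inv_into (carrier G) \<gamma> x"
  by (simp add: aut_pow_def)

lemma iso_inv_l: "\<gamma> \<in> iso G G \<Longrightarrow> x \<in> carrier G \<Longrightarrow> inv_into (carrier G) \<gamma> (\<gamma> x) = x"
  unfolding iso_def bij_betw_def by (simp add: inv_into_f_f)

lemma iso_inv_r: "\<gamma> \<in> iso G G \<Longrightarrow> x \<in> carrier G \<Longrightarrow> \<gamma> (inv_into (carrier G) \<gamma> x) = x"
  unfolding iso_def bij_betw_def by (simp add: f_inv_into_f)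

lemma iso_inv_closed: "\<gamma> \<in> iso G G \<Longrightarrow> x \<in> carrier G \<Longrightarrow> inv_into (carrier G) \<gamma> x \<in> carrier G"
  by (rule hom_in_carrier[OF iso_imp_homomorphism[OF iso_set_sym]])

lemma aut_pow_step:
  assumes g: "\<gamma> \<in> iso G G" and x: "x \<in> carrier G"
  shows "aut_pow G \<gamma> (n + 1) x = \<gamma> (aut_pow G \<gamma> n x)"
proof (cases "0 \<le> n")
  case True
  then have "nat (n + 1) = Suc (nat n)" by simp
  then show ?thesis using True by (simp add: aut_pow_def)
next
  case False
  let ?g = "inv_into (carrier G) \<gamma>"
  have e: "nat (- n) = Suc (nat (- (n + 1)))" using False by simp
  have c: "(?g ^^ j) x \<in> carrier G" for j
    by (induction j) (auto simp: x iso_inv_closed[OF g])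
  have "aut_pow G \<gamma> (n + 1) x = (?g ^^ nat (- (n + 1))) x"
    using False by (cases "n + 1 = 0") (auto simp: aut_pow_def)
  moreover have "aut_pow G \<gamma> n x = ?g ((?g ^^ nat (- (n + 1))) x)"
    using False e by (simp add: aut_pow_def)
  ultimately show ?thesis using iso_inv_r[OF g c] by simp
qed

lemma aut_pow_step_down:
  assumes g: "\<gamma> \<in> iso G G" and x: "x \<in> carrier G"
  shows "aut_pow G \<gamma> (n - 1) x = inv_into (carrier G) \<gamma> (aut_pow G \<gamma> n x)"
proof -
  have "aut_pow G \<gamma> n x = \<gamma> (aut_pow G \<gamma> (n - 1) x)"
    using aut_pow_step[OF g x, of "n - 1"] by simp
  then show ?thesis using iso_inv_l[OF g aut_pow_closed[OF g x]] by simp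
qed

lemma aut_pow_add:
  assumes g: "\<gamma> \<in> iso G G" and x: "x \<in> carrier G"
  shows "aut_pow G \<gamma> (n + m) x = aut_pow G \<gamma> n (aut_pow G \<gamma> m x)"
proof (induction n rule: int_induct[where k = 0])
  case base then show ?case by simp
next
  case (step1 i)
  have "aut_pow G \<gamma> (i + 1 + m) x = aut_pow G \<gamma> ((i + m) + 1) x"
    by (rule arg_cong[where f="\<lambda>j. aut_pow G \<gamma> j x"]) simp
  also have "\<dots> = \<gamma> (aut_pow G \<gamma> (i + m) x)" by (rule aut_pow_step[OF g x])
  also have "\<dots> = \<gamma> (aut_pow G \<gamma> i (aut_pow G \<gamma> m x))" using step1(2) by (rule arg_cong)
  also have "\<dots> = aut_pow G \<gamma> (i + 1) (aut_pow G \<gamma> m x)"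
    by (rule aut_pow_step[symmetric, OF g aut_pow_closed[OF g x]])
  finally show ?case .
next
  case (step2 i)
  have "aut_pow G \<gamma> (i - 1 + m) x = aut_pow G \<gamma> ((i + m) - 1) x"
    by (rule arg_cong[where f="\<lambda>j. aut_pow G \<gamma> j x"]) simp
  also have "\<dots> = inv_into (carrier G) \<gamma> (aut_pow G \<gamma> (i + m) x)" by (rule aut_pow_step_down[OF g x])
  also have "\<dots> = inv_into (carrier G) \<gamma> (aut_pow G \<gamma> i (aut_pow G \<gamma> m x))" using step2(2) by (rule arg_cong)
  also have "\<dots> = aut_pow G \<gamma> (i - 1) (aut_pow G \<gamma> m x)"
    by (rule aut_pow_step_down[symmetric, OF g aut_pow_closed[OF g x]])
  finally show ?case .
qed

end



locale FG = group G for G :: "('g, 'b) monoid_scheme" (structure) +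
  fixes \<alpha> :: "'g \<Rightarrow> 'g" and k :: 'g
  assumes a_iso: "\<alpha> \<in> iso G G" and k_c: "k \<in> carrier G"
begin

abbreviation A where "A \<equiv> aut_pow G \<alpha>"
abbreviation \<beta> where "\<beta> \<equiv> (\<lambda>g. k \<otimes> \<alpha> g \<otimes> inv k)"
abbreviation \<alpha>' where "\<alpha>' \<equiv> inv_into (carrier G) \<alpha>"

definition Kp :: "nat \<Rightarrow> 'g" where "Kp n = ((\<lambda>x. k \<otimes> \<alpha> x) ^^ n) \<one>"

definition K :: "int \<Rightarrow> 'g" where
  "K n = (if 0 \<le> n then Kp (nat n) else A n (inv (Kp (nat (- n)))))"

lemma a_hom: "\<alpha> \<in> hom G G" using a_iso iso_imp_homomorphism by blast
lemma a_closed[simp]: "x \<in> carrier G \<Longrightarrow> \<alpha> x \<in> carrier G" by (rule hom_in_carrier[OF a_hom])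
lemma a_mult: "x \<in> carrier G \<Longrightarrow> y \<in> carrier G \<Longrightarrow> \<alpha> (x \<otimes> y) = \<alpha> x \<otimes> \<alpha> y"
  by (rule hom_mult[OF a_hom])
lemma a_inv: "x \<in> carrier G \<Longrightarrow> \<alpha> (inv x) = inv (\<alpha> x)"
  using aut_pow_inv[OF a_iso, of x 1] by (simp add: aut_pow_1)
lemma a_one: "\<alpha> \<one> = \<one>"
  using aut_pow_one[OF a_iso, of 1] by (simp add: aut_pow_1)

lemma A_closed[simp]: "x \<in> carrier G \<Longrightarrow> A n x \<in> carrier G" by (rule aut_pow_closed[OF a_iso])
lemma A_mult: "x \<in> carrier G \<Longrightarrow> y \<in> carrier G \<Longrightarrow> A n (x \<otimes> y) = A n x \<otimes> A n y"
  by (rule aut_pow_mult[OF a_iso])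
lemma A_inv: "x \<in> carrier G \<Longrightarrow> A n (inv x) = inv (A n x)" by (rule aut_pow_inv[OF a_iso])
lemma A_one[simp]: "A n \<one> = \<one>" by (rule aut_pow_one[OF a_iso])
lemma A_add: "x \<in> carrier G \<Longrightarrow> A (n + m) x = A n (A m x)" by (rule aut_pow_add[OF a_iso])

lemma Kp_closed[simp]: "Kp n \<in> carrier G"
  unfolding Kp_def by (induction n) (auto simp: k_c)

lemma Kp_0[simp]: "Kp 0 = \<one>" by (simp add: Kp_def)

lemma Kp_Suc: "Kp (Suc n) = k \<otimes> \<alpha> (Kp n)" by (simp add: Kp_def)

lemma Kp_Suc': "Kp (Suc n) = Kp n \<otimes> A (int n) k"
proof (induction n)
  case 0 then show ?case by (simp add: Kp_Suc a_one k_c)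
next
  case (Suc n)
  have "Kp (Suc (Suc n)) = k \<otimes> \<alpha> (Kp n \<otimes> A (int n) k)" using Suc by (simp add: Kp_Suc)
  also have "\<dots> = k \<otimes> \<alpha> (Kp n) \<otimes> \<alpha> (A (int n) k)" by (simp add: a_mult k_c m_assoc)
  also have "\<alpha> (A (int n) k) = A (int (Suc n)) k"
    using aut_pow_step[OF a_iso k_c, of "int n"] by (simp add: add.commute)
  finally show ?case by (simp add: Kp_Suc)
qed

lemma K_closed[simp]: "K n \<in> carrier G" by (simp add: K_def)

lemma K_nat[simp]: "K (int n) = Kp n" by (simp add: K_def)

lemma K_0[simp]: "K 0 = \<one>" by (simp add: K_def)

lemma K_neg: "K (- int n) = A (- int n) (inv (Kp n))"
  by (cases "n = 0") (auto simp: K_def)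

lemma K_1: "K 1 = k"
  using K_nat[of 1] by (simp add: Kp_Suc a_one k_c)

lemma K_step: "K (n + 1) = K n \<otimes> A n k"
proof (cases "0 \<le> n")
  case True
  define j where "j = nat n"
  have j: "n = int j" using True unfolding j_def by simp
  have "K (n + 1) = K (int (Suc j))" using j by (simp add: add.commute)
  also have "\<dots> = Kp (Suc j)" by (rule K_nat)
  also have "\<dots> = Kp j \<otimes> A (int j) k" by (rule Kp_Suc')
  finally show ?thesis using j by simp
next
  case False
  define j where "j = nat (- n) - 1"
  have j: "n = - int (Suc j)" using False unfolding j_def by simp
  have n1: "n + 1 = - int j" using j by simp
  have Kn: "K n = A n (inv (Kp (Suc j)))" unfolding j by (rule K_neg)
  have "K n \<otimes> A n k = A n (inv (Kp (Suc j))) \<otimes> A n k" by (simp only: Kn)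
  also have "\<dots> = A n (inv (Kp (Suc j)) \<otimes> k)" by (simp add: A_mult k_c)
  also have "inv (Kp (Suc j)) \<otimes> k = inv (\<alpha> (Kp j))"
    by (simp add: Kp_Suc inv_mult_group k_c m_assoc)
  also have "\<dots> = A 1 (inv (Kp j))" by (simp add: aut_pow_1 a_inv)
  also have "A n (A 1 (inv (Kp j))) = A (n + 1) (inv (Kp j))" using A_add[of "inv (Kp j)" n 1] by simp
  also have "\<dots> = K (n + 1)" unfolding n1 by (rule K_neg[symmetric])
  finally show ?thesis by simp
qed


lemma K_cocycle: "K (n + m) = K n \<otimes> A n (K m)"
proof (induction m rule: int_induct[where k = 0])
  case base then show ?case by simp
next
  case (step1 i)
  have "K (n + (i + 1)) = K (n + i + 1)" by (rule arg_cong[where f=K]) simp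
  also have "\<dots> = K (n + i) \<otimes> A (n + i) k" by (rule K_step)
  also have "\<dots> = K n \<otimes> A n (K i) \<otimes> A n (A i k)" using step1(2) A_add[OF k_c, of n i] by simp
  also have "\<dots> = K n \<otimes> A n (K i \<otimes> A i k)" by (simp add: A_mult k_c m_assoc)
  also have "\<dots> = K n \<otimes> A n (K (i + 1))" by (simp add: K_step)
  finally show ?case .
next
  case (step2 i)
  have e1: "K (n + i) = K (n + (i - 1)) \<otimes> A (n + (i - 1)) k"
    using K_step[of "n + (i - 1)"] by simp
  have e2: "K i = K (i - 1) \<otimes> A (i - 1) k"
    using K_step[of "i - 1"] by simp
  have "K (n + (i - 1)) = K (n + i) \<otimes> inv (A (n + (i - 1)) k)"
    using e1 by (simp add: inv_solve_right k_c)
  also have "\<dots> = K n \<otimes> A n (K i) \<otimes> inv (A n (A (i - 1) k))" using step2(2) A_add[OF k_c, of n "i - 1"] by simp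
  also have "\<dots> = K n \<otimes> A n (K i \<otimes> inv (A (i - 1) k))" by (simp add: A_mult A_inv k_c m_assoc)
  also have "K i \<otimes> inv (A (i - 1) k) = K (i - 1)" using e2 by (simp add: inv_solve_right' k_c)
  finally show ?case .
qed


lemma cancel1[simp]: "x \<in> carrier G \<Longrightarrow> z \<in> carrier G \<Longrightarrow> inv x \<otimes> (x \<otimes> z) = z"
  by (simp add: m_assoc[symmetric])
lemma cancel2[simp]: "x \<in> carrier G \<Longrightarrow> z \<in> carrier G \<Longrightarrow> x \<otimes> (inv x \<otimes> z) = z"
  by (simp add: m_assoc[symmetric])

lemma ai_closed[simp]: "x \<in> carrier G \<Longrightarrow> \<alpha>' x \<in> carrier G"
  using A_closed[of x "-1"] by (simp add: aut_pow_m1)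
lemma ai_mult: "x \<in> carrier G \<Longrightarrow> y \<in> carrier G \<Longrightarrow> \<alpha>' (x \<otimes> y) = \<alpha>' x \<otimes> \<alpha>' y"
  using A_mult[of x y "-1"] by (simp add: aut_pow_m1)
lemma ai_inv: "x \<in> carrier G \<Longrightarrow> \<alpha>' (inv x) = inv (\<alpha>' x)"
  using A_inv[of x "-1"] by (simp add: aut_pow_m1)

lemma b_closed: "x \<in> carrier G \<Longrightarrow> \<beta> x \<in> carrier G" by (simp add: k_c)

lemma b_inj: "inj_on \<beta> (carrier G)"
proof (rule inj_onI)
  fix x y assume x: "x \<in> carrier G" and y: "y \<in> carrier G" and e: "\<beta> x = \<beta> y"
  then have "\<alpha> x = \<alpha> y" using k_c by (simp add: m_assoc)
  then show "x = y" using iso_inv_l[OF a_iso x] iso_inv_l[OF a_iso y] by metis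
qed

lemma b_surj_pt: "y \<in> carrier G \<Longrightarrow> \<beta> (\<alpha>' (inv k \<otimes> y \<otimes> k)) = y"
  using iso_inv_r[OF a_iso, of "inv k \<otimes> y \<otimes> k"] k_c by (simp add: m_assoc)

lemma b_iso: "\<beta> \<in> iso G G"
proof -
  have "\<beta> \<in> hom G G"
  proof (rule homI)
    fix x assume "x \<in> carrier G" then show "\<beta> x \<in> carrier G" by (rule b_closed)
  next
    fix x y assume "x \<in> carrier G" "y \<in> carrier G"
    then show "\<beta> (x \<otimes> y) = \<beta> x \<otimes> \<beta> y" using k_c by (simp add: a_mult m_assoc)
  qed
  moreover have "\<beta> ` carrier G = carrier G"
  proof
    show "\<beta> ` carrier G \<subseteq> carrier G" using b_closed by blast
    show "carrier G \<subseteq> \<beta> ` carrier G"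
    proof
      fix y assume y: "y \<in> carrier G"
      then have "y = \<beta> (\<alpha>' (inv k \<otimes> y \<otimes> k))" using b_surj_pt by simp
      moreover have "\<alpha>' (inv k \<otimes> y \<otimes> k) \<in> carrier G" using y k_c by simp
      ultimately show "y \<in> \<beta> ` carrier G" by blast
    qed
  qed
  ultimately show ?thesis using b_inj by (simp add: iso_iff)
qed

lemma b_inv: "y \<in> carrier G \<Longrightarrow> inv_into (carrier G) \<beta> y = \<alpha>' (inv k \<otimes> y \<otimes> k)"
  by (rule inv_into_f_eq[OF b_inj]) (simp_all add: k_c b_surj_pt)

lemma K_m1: "K (-1) = \<alpha>' (inv k)"
  using K_neg[of 1] by (simp add: Kp_Suc a_one k_c aut_pow_m1)

lemma B_formula:
  assumes g: "g \<in> carrier G"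
  shows "aut_pow G \<beta> n g = K n \<otimes> A n g \<otimes> inv (K n)"
proof (induction n rule: int_induct[where k = 0])
  case base then show ?case using g by simp
next
  case (step1 i)
  have "aut_pow G \<beta> (i + 1) g = \<beta> (aut_pow G \<beta> i g)" by (rule aut_pow_step[OF b_iso g])
  also have "\<dots> = \<beta> (K i \<otimes> A i g \<otimes> inv (K i))" using step1(2) by simp
  also have "\<dots> = k \<otimes> \<alpha> (K i) \<otimes> \<alpha> (A i g) \<otimes> inv (k \<otimes> \<alpha> (K i))"
    using g k_c by (simp add: a_mult a_inv m_assoc inv_mult_group)
  also have "\<alpha> (A i g) = A (i + 1) g" using aut_pow_step[OF a_iso g, of i] by simp
  also have "k \<otimes> \<alpha> (K i) = K (i + 1)"
  proof -
    have "K (i + 1) = K (1 + i)" by (simp add: add.commute)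
    also have "\<dots> = K 1 \<otimes> A 1 (K i)" by (rule K_cocycle)
    finally show ?thesis by (simp add: K_1 aut_pow_1)
  qed
  finally show ?case .
next
  case (step2 i)
  have "aut_pow G \<beta> (i - 1) g = inv_into (carrier G) \<beta> (aut_pow G \<beta> i g)" by (rule aut_pow_step_down[OF b_iso g])
  also have "\<dots> = \<alpha>' (inv k \<otimes> (K i \<otimes> A i g \<otimes> inv (K i)) \<otimes> k)" using step2(2) g by (simp add: b_inv)
  also have "\<dots> = \<alpha>' (inv k \<otimes> K i) \<otimes> \<alpha>' (A i g) \<otimes> inv (\<alpha>' (inv k \<otimes> K i))"
    using g k_c by (simp add: ai_mult ai_inv m_assoc inv_mult_group)
  also have "\<alpha>' (A i g) = A (i - 1) g" using aut_pow_step_down[OF a_iso g, of i] by simp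
  also have "\<alpha>' (inv k \<otimes> K i) = K (i - 1)"
  proof -
    have "K (i - 1) = K (-1 + i)" by simp
    also have "\<dots> = K (-1) \<otimes> A (-1) (K i)" by (rule K_cocycle)
    finally show ?thesis using k_c by (simp add: K_m1 aut_pow_m1 ai_mult)
  qed
  finally show ?case .
qed

definition hh :: "cantor \<Rightarrow> 'g" where "hh x = K (- int (LL x))"

definition gv :: "(cantor \<Rightarrow> cantor) \<Rightarrow> cantor \<Rightarrow> 'g" where
  "gv v x = K (log2_slope v (inv_into UNIV v x)) \<otimes> A (log2_slope v (inv_into UNIV v x)) (hh (inv_into UNIV v x))"

definition phi1 :: "(cantor \<Rightarrow> 'g) \<Rightarrow> (cantor \<Rightarrow> cantor) \<Rightarrow> cantor \<Rightarrow> 'g" where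
  "phi1 c v x = (if x \<in> Q2 then hh x \<otimes> c x \<otimes> inv (gv v x) else \<one>)"

definition Phi :: "(cantor \<Rightarrow> 'g) \<times> (cantor \<Rightarrow> cantor) \<Rightarrow> (cantor \<Rightarrow> 'g) \<times> (cantor \<Rightarrow> cantor)" where
  "Phi p = (phi1 (fst p) (snd p), snd p)"

lemma Phi_eq: "Phi (c, v) = (phi1 c v, v)" by (simp add: Phi_def)

lemma hh_closed[simp]: "hh x \<in> carrier G" by (simp add: hh_def)
lemma gv_closed[simp]: "gv v x \<in> carrier G" by (simp add: gv_def)

lemma gv_at: "inj v \<Longrightarrow> gv v (v y) = K (log2_slope v y) \<otimes> A (log2_slope v y) (hh y)"
  by (simp add: gv_def)

lemma gv_fin:
  assumes v: "v \<in> thompsonV"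
  shows "finite {x. x \<in> Q2 \<and> gv v x \<noteq> hh x}"
proof -
  obtain ms ms' where h: "length ms = length ms'" "cyl_partition ms" "cyl_partition ms'"
    "\<forall>k < length ms. \<forall>x. v (prepend (ms ! k) x) = prepend (ms' ! k) x"
    using v unfolding thompsonV_def by blast
  have bv: "bij v" using V_bij[OF v] .
  have "{x. x \<in> Q2 \<and> gv v x \<noteq> hh x} \<subseteq> (\<lambda>j. v (prepend (ms!j) (\<lambda>_. False))) ` {..<length ms}"
  proof
    fix x assume "x \<in> {x. x \<in> Q2 \<and> gv v x \<noteq> hh x}"
    then have xq: "x \<in> Q2" and ne: "gv v x \<noteq> hh x" by auto
    define y where "y = inv_into UNIV v x"
    have xy: "x = v y" unfolding y_def using bv by (simp add: bij_def surj_f_inv_f)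
    obtain j where j: "j < length ms" "y \<in> cyl (ms ! j)" using h(2) unfolding cyl_partition_def by blast
    obtain z where z: "y = prepend (ms!j) z" using j cyl_ex by blast
    have vy: "v y = prepend (ms'!j) z" using h(4) j z by simp
    have sl: "log2_slope v y = int (length (ms!j)) - int (length (ms'!j))"
      using slope_eq[of y "ms!j" v "ms'!j"] j h(4) by simp
    show "x \<in> (\<lambda>j. v (prepend (ms!j) (\<lambda>_. False))) ` {..<length ms}"
    proof (cases "z = (\<lambda>_. False)")
      case True then show ?thesis using xy z j by blast
    next
      case False
      have zq: "z \<in> Q2" using xq xy vy prepend_Q2 by simp
      have Ly: "LL y = length (ms!j) + LL z" using LL_prepend[OF zq False] z by simp
      have Lx: "LL x = length (ms'!j) + LL z" using LL_prepend[OF zq False] xy vy by simp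
      have "gv v x = K (log2_slope v y) \<otimes> A (log2_slope v y) (hh y)"
        using gv_at[of v y] bv xy by (simp add: bij_def)
      also have "\<dots> = K (log2_slope v y + - int (LL y))" unfolding hh_def by (rule K_cocycle[symmetric])
      also have "log2_slope v y + - int (LL y) = - int (LL x)" using sl Ly Lx by simp
      finally have "gv v x = hh x" by (simp add: hh_def)
      then show ?thesis using ne by simp
    qed
  qed
  then show ?thesis by (rule finite_subset) simp
qed

lemma fsm_closed: "a \<in> fin_supp_maps G \<Longrightarrow> a x \<in> carrier G"
  unfolding fin_supp_maps_def by (cases "x \<in> Q2") auto

lemma fsm_out: "a \<in> fin_supp_maps G \<Longrightarrow> x \<notin> Q2 \<Longrightarrow> a x = \<one>"
  unfolding fin_supp_maps_def by auto

lemma fsm_fin: "a \<in> fin_supp_maps G \<Longrightarrow> finite {x. a x \<noteq> \<one>}"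
  unfolding fin_supp_maps_def by auto

lemma Phi_carrier:
  assumes a: "a \<in> fin_supp_maps G" and v: "v \<in> thompsonV"
  shows "Phi (a, v) \<in> fin_supp_maps G \<times> thompsonV"
proof -
  let ?c = "phi1 a v"
  have "{x. ?c x \<noteq> \<one>} \<subseteq> {x. a x \<noteq> \<one>} \<union> {x. x \<in> Q2 \<and> gv v x \<noteq> hh x}"
    by (auto simp: phi1_def)
  then have "finite {x. ?c x \<noteq> \<one>}" using fsm_fin[OF a] gv_fin[OF v] finite_subset by blast
  moreover have "\<forall>x\<in>Q2. ?c x \<in> carrier G" using fsm_closed[OF a] by (simp add: phi1_def)
  moreover have "\<forall>x. x \<notin> Q2 \<longrightarrow> ?c x = \<one>" by (simp add: phi1_def)
  ultimately have "?c \<in> fin_supp_maps G" unfolding fin_supp_maps_def by simp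
  moreover have "Phi (a, v) = (?c, v)" by (rule Phi_eq)
  ultimately show ?thesis using v by simp
qed

lemma alg1:
  assumes "P \<in> carrier G" "a \<in> carrier G" "b \<in> carrier G" "H \<in> carrier G" "W \<in> carrier G" "L \<in> carrier G"
  shows "P \<otimes> (a \<otimes> b) \<otimes> inv (L \<otimes> W) = P \<otimes> a \<otimes> inv (L \<otimes> H) \<otimes> (L \<otimes> (H \<otimes> b \<otimes> inv W) \<otimes> inv L)"
  using assms by (simp add: m_assoc inv_mult_group)

abbreviation FA where "FA \<equiv> fraction_group G \<alpha>"
abbreviation FB where "FB \<equiv> fraction_group G \<beta>"

lemma FA_mult: "(a, v) \<otimes>\<^bsub>FA\<^esub> (b, w) = ((\<lambda>x. a x \<otimes> V_act G \<alpha> v b x), v \<circ> w)"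
  by (simp add: fraction_group_def)
lemma FB_mult: "(a, v) \<otimes>\<^bsub>FB\<^esub> (b, w) = ((\<lambda>x. a x \<otimes> V_act G \<beta> v b x), v \<circ> w)"
  by (simp add: fraction_group_def)

lemma phi1_closed: "a \<in> fin_supp_maps G \<Longrightarrow> phi1 a v x \<in> carrier G"
  using fsm_closed[of a x] by (simp add: phi1_def)

lemma Phi_mult:
  assumes a: "a \<in> fin_supp_maps G" and v: "v \<in> thompsonV"
    and b: "b \<in> fin_supp_maps G" and w: "w \<in> thompsonV"
  shows "Phi ((a, v) \<otimes>\<^bsub>FA\<^esub> (b, w)) = Phi (a, v) \<otimes>\<^bsub>FB\<^esub> Phi (b, w)"
proof -
  have bv: "bij v" and bw: "bij w" using V_bij v w by auto
  have bvw: "bij (v \<circ> w)" using bv bw bij_comp by blast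
  have "phi1 (\<lambda>x. a x \<otimes> V_act G \<alpha> v b x) (v \<circ> w) x = phi1 a v x \<otimes> V_act G \<beta> v (phi1 b w) x" for x
  proof (cases "x \<in> Q2")
    case False
    then show ?thesis by (simp add: phi1_def V_act_def)
  next
    case True
    define y where "y = inv_into UNIV v x"
    have xy: "x = v y" unfolding y_def using bv by (simp add: bij_def surj_f_inv_f)
    have yq: "y \<in> Q2" using True xy V_Q2[OF v] by simp
    define z where "z = inv_into UNIV w y"
    have yz: "y = w z" unfolding z_def using bw by (simp add: bij_def surj_f_inv_f)
    define n where "n = log2_slope v y"
    define m where "m = log2_slope w z"
    have iv: "inv_into UNIV v x = y" by (simp add: y_def)
    have Va: "V_act G \<alpha> v b x = A n (b y)" using True by (simp add: V_act_def iv n_def)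
    have pb: "phi1 b w y = hh y \<otimes> b y \<otimes> inv (gv w y)" using yq by (simp add: phi1_def)
    have Vb: "V_act G \<beta> v (phi1 b w) x = K n \<otimes> (A n (hh y) \<otimes> A n (b y) \<otimes> inv (A n (gv w y))) \<otimes> inv (K n)"
      using True B_formula[OF phi1_closed[OF b], of n w y] fsm_closed[OF b, of y]
      by (simp add: V_act_def iv n_def[symmetric] pb A_mult A_inv)
    have gvx: "gv v x = K n \<otimes> A n (hh y)" using gv_at[of v y] bv xy by (simp add: bij_def n_def)
    have gwy: "gv w y = K m \<otimes> A m (hh z)" using gv_at[of w z] bw yz by (simp add: bij_def m_def)
    have xz: "x = (v \<circ> w) z" using xy yz by simp
    have "gv (v \<circ> w) x = K (log2_slope (v \<circ> w) z) \<otimes> A (log2_slope (v \<circ> w) z) (hh z)"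
      using gv_at[of "v \<circ> w" z] bvw xz by (simp add: bij_def del: comp_apply)
    also have "log2_slope (v \<circ> w) z = n + m" using V_chain[OF v w, of z] yz n_def m_def by simp
    also have "K (n + m) \<otimes> A (n + m) (hh z) = K n \<otimes> A n (gv w y)"
      by (simp add: K_cocycle A_add gwy A_mult m_assoc)
    finally have gvw: "gv (v \<circ> w) x = K n \<otimes> A n (gv w y)" .
    have "phi1 (\<lambda>x. a x \<otimes> V_act G \<alpha> v b x) (v \<circ> w) x = hh x \<otimes> (a x \<otimes> A n (b y)) \<otimes> inv (K n \<otimes> A n (gv w y))"
      using True by (simp add: phi1_def Va gvw)
    also have "\<dots> = hh x \<otimes> a x \<otimes> inv (K n \<otimes> A n (hh y)) \<otimes> (K n \<otimes> (A n (hh y) \<otimes> A n (b y) \<otimes> inv (A n (gv w y))) \<otimes> inv (K n))"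
      by (rule alg1) (simp_all add: fsm_closed[OF a] fsm_closed[OF b])
    also have "\<dots> = phi1 a v x \<otimes> V_act G \<beta> v (phi1 b w) x"
      using True by (simp add: phi1_def Vb gvx)
    finally show ?thesis .
  qed
  then show ?thesis by (simp add: Phi_eq FA_mult FB_mult fun_eq_iff)
qed

lemma Phi_inj: "inj_on Phi (carrier FA)"
proof (rule inj_onI)
  fix p q assume p: "p \<in> carrier FA" and q: "q \<in> carrier FA" and e: "Phi p = Phi q"
  obtain a v where pv: "p = (a, v)" by (cases p)
  obtain b w where qw: "q = (b, w)" by (cases q)
  have a: "a \<in> fin_supp_maps G" and b: "b \<in> fin_supp_maps G"
    using p q pv qw by (auto simp: fraction_group_def)
  have vw: "v = w" and ph: "phi1 a v = phi1 b w" using e pv qw by (auto simp: Phi_eq)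
  have "a x = b x" for x
  proof (cases "x \<in> Q2")
    case False then show ?thesis using fsm_out[OF a False] fsm_out[OF b False] by simp
  next
    case True
    have "hh x \<otimes> a x \<otimes> inv (gv v x) = hh x \<otimes> b x \<otimes> inv (gv v x)"
      using fun_cong[OF ph, of x] True vw by (simp add: phi1_def)
    then show ?thesis using fsm_closed[OF a, of x] fsm_closed[OF b, of x] by (simp add: m_assoc)
  qed
  then show "p = q" using pv qw vw by (simp add: fun_eq_iff)
qed

lemma Phi_surj: "Phi ` carrier FA = carrier FB"
proof
  show "Phi ` carrier FA \<subseteq> carrier FB"
  proof
    fix q assume "q \<in> Phi ` carrier FA"
    then obtain a v where "q = Phi (a, v)" "(a, v) \<in> carrier FA" by auto
    then show "q \<in> carrier FB" using Phi_carrier by (simp add: fraction_group_def)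
  qed
next
  show "carrier FB \<subseteq> Phi ` carrier FA"
  proof
    fix q assume q: "q \<in> carrier FB"
    obtain c v where qv: "q = (c, v)" by (cases q)
    have c: "c \<in> fin_supp_maps G" and v: "v \<in> thompsonV" using q qv by (auto simp: fraction_group_def)
    define a where "a = (\<lambda>x. if x \<in> Q2 then inv (hh x) \<otimes> c x \<otimes> gv v x else \<one>)"
    have "{x. a x \<noteq> \<one>} \<subseteq> {x. c x \<noteq> \<one>} \<union> {x. x \<in> Q2 \<and> gv v x \<noteq> hh x}"
      by (auto simp: a_def)
    then have "finite {x. a x \<noteq> \<one>}" using fsm_fin[OF c] gv_fin[OF v] finite_subset by blast
    moreover have "\<forall>x\<in>Q2. a x \<in> carrier G" using fsm_closed[OF c] by (simp add: a_def)
    moreover have "\<forall>x. x \<notin> Q2 \<longrightarrow> a x = \<one>" by (simp add: a_def)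
    ultimately have a: "a \<in> fin_supp_maps G" unfolding fin_supp_maps_def by simp
    have "phi1 a v x = c x" for x
    proof (cases "x \<in> Q2")
      case False then show ?thesis using fsm_out[OF c False] by (simp add: phi1_def)
    next
      case True then show ?thesis using fsm_closed[OF c, of x] by (simp add: phi1_def a_def m_assoc)
    qed
    then have "Phi (a, v) = q" using qv by (simp add: Phi_eq fun_eq_iff)
    moreover have "(a, v) \<in> carrier FA" using a v by (simp add: fraction_group_def)
    ultimately show "q \<in> Phi ` carrier FA" by blast
  qed
qed

lemma Phi_iso: "Phi \<in> iso FA FB"
proof (rule isoI)
  show "Phi \<in> hom FA FB"
  proof (rule homI)
    fix p assume "p \<in> carrier FA"
    then show "Phi p \<in> carrier FB" using Phi_surj by blast
  next
    fix p q assume p: "p \<in> carrier FA" and q: "q \<in> carrier FA"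
    obtain a v where pv: "p = (a, v)" by (cases p)
    obtain b w where qw: "q = (b, w)" by (cases q)
    have "a \<in> fin_supp_maps G" "v \<in> thompsonV" "b \<in> fin_supp_maps G" "w \<in> thompsonV"
      using p q pv qw by (auto simp: fraction_group_def)
    then show "Phi (p \<otimes>\<^bsub>FA\<^esub> q) = Phi p \<otimes>\<^bsub>FB\<^esub> Phi q" using Phi_mult pv qw by simp
  qed
  show "bij_betw Phi (carrier FA) (carrier FB)"
    using Phi_inj Phi_surj by (simp add: bij_betw_def)
qed

end

theorem mainTheorem9:
  fixes G :: "('g, 'b) monoid_scheme" and \<alpha> :: "'g \<Rightarrow> 'g" and k :: 'g
  assumes "group G" and "\<alpha> \<in> iso G G" and "k \<in> carrier G"
  shows "fraction_group G \<alpha> \<cong> fraction_group G (\<lambda>g. k \<otimes>\<^bsub>G\<^esub> \<alpha> g \<otimes>\<^bsub>G\<^esub> inv\<^bsub>G\<^esub> k)"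
proof -
  interpret FG G \<alpha> k using assms by (simp add: FG_def FG_axioms_def)
  show ?thesis by (rule is_isoI[OF Phi_iso])
qed

end
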